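(* Let $S$ be a finite generating subset of a group $G$ with $1\in S$. Assume that the graph $\Gamma=\mathrm{Cay}(G,S)$ is degenerate, and let $H$ be a subgroup of $G$ which is a $2$-fragment of $\Gamma$. Then $S^{-1}HS=S^{-1}S\cup a^{-1}Ha$ for some $a\in S$.
   Context: $\mathrm{Cay}(G,S)$ is the graph $(G,E)$ with $E=\{(x,y):x^{-1}y\in S\}$, so $\Gamma(X)=XS=\{xs:x\in X,s\in S\}$. Write $\partial(X)=XS\setminus X$ and $\nabla(X)=G\setminus XS$. $\Gamma$ is $k$-separable if there is a finite $X$ with $|X|\ge k$, $|\nabla(X)|\ge k$, and then $\kappa_k(\Gamma)=\min\{|\partial(X)|: X\text{ finite},|X|\ge k,|\nabla(X)|\ge k\}$. A $k$-fragment is a finite $X$ with $|X|\ge k$, $|\nabla(X)|\ge k$ and $|\partial(X)|=\kappa_k(\Gamma)$. $\Gamma$ is degenerate if it is $2$-separable and $\kappa_2(\Gamma)=\kappa_1(\Gamma)$. *)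

theory Defs
  imports "HOL-Algebra.Algebra"
begin

definition cay_nbhd :: "('a, 'b) monoid_scheme \<Rightarrow> 'a set \<Rightarrow> 'a set \<Rightarrow> 'a set" where
  "cay_nbhd G S A = {x \<otimes>\<^bsub>G\<^esub> s | x s. x \<in> A \<and> s \<in> S}"

definition cay_boundary :: "('a, 'b) monoid_scheme \<Rightarrow> 'a set \<Rightarrow> 'a set \<Rightarrow> 'a set" where
  "cay_boundary G S A = cay_nbhd G S A - A"

definition cay_exterior :: "('a, 'b) monoid_scheme \<Rightarrow> 'a set \<Rightarrow> 'a set \<Rightarrow> 'a set" where
  "cay_exterior G S A = carrier G - cay_nbhd G S A"

definition card_ge :: "'a set \<Rightarrow> nat \<Rightarrow> bool" where
  "card_ge A k \<longleftrightarrow> infinite A \<or> k \<le> card A"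

definition cay_admissible :: "('a, 'b) monoid_scheme \<Rightarrow> 'a set \<Rightarrow> nat \<Rightarrow> 'a set \<Rightarrow> bool" where
  "cay_admissible G S k A \<longleftrightarrow> A \<subseteq> carrier G \<and> finite A \<and> k \<le> card A
      \<and> card_ge (cay_exterior G S A) k"

definition k_separable :: "('a, 'b) monoid_scheme \<Rightarrow> 'a set \<Rightarrow> nat \<Rightarrow> bool" where
  "k_separable G S k \<longleftrightarrow> (\<exists>A. cay_admissible G S k A)"

definition kappa :: "('a, 'b) monoid_scheme \<Rightarrow> 'a set \<Rightarrow> nat \<Rightarrow> nat" where
  "kappa G S k = (LEAST n. \<exists>A. cay_admissible G S k A \<and> card (cay_boundary G S A) = n)"

definition k_fragment :: "('a, 'b) monoid_scheme \<Rightarrow> 'a set \<Rightarrow> nat \<Rightarrow> 'a set \<Rightarrow> bool" where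
  "k_fragment G S k A \<longleftrightarrow> cay_admissible G S k A \<and> card (cay_boundary G S A) = kappa G S k"

definition cay_degenerate :: "('a, 'b) monoid_scheme \<Rightarrow> 'a set \<Rightarrow> bool" where
  "cay_degenerate G S \<longleftrightarrow> k_separable G S 2 \<and> kappa G S 2 = kappa G S 1"

end

theory Submission
  imports Defs
begin

theorem lemma9p2:
  fixes G (structure) and S H :: "'a set"
  assumes "group G"
    and "S \<subseteq> carrier G" and "finite S" and "generate G S = carrier G"
    and "\<one> \<in> S"
    and "cay_degenerate G S"
    and "subgroup H G"
    and "k_fragment G S 2 H"
  shows "\<exists>a\<in>S. {inv s \<otimes> h \<otimes> t | s h t. s \<in> S \<and> h \<in> H \<and> t \<in> S}
           = {inv s \<otimes> t | s t. s \<in> S \<and> t \<in> S} \<union> {inv a \<otimes> h \<otimes> a | h. h \<in> H}"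
proof -
  interpret group G by fact
  note SG = assms(2) and sub = assms(7)
  have HG: "H \<subseteq> carrier G" using sub subgroup.subset by blast
  have adm: "cay_admissible G S 2 H" and bd: "card (cay_boundary G S H) = kappa G S 2"
    using assms(8) unfolding k_fragment_def by auto
  have finH: "finite H" and cH: "2 \<le> card H"
    and ext: "card_ge (cay_exterior G S H) 2" using adm unfolding cay_admissible_def by auto
  define HS where "HS = cay_nbhd G S H"
  have HSimg: "HS = (\<lambda>(x,s). x \<otimes> s) ` (H \<times> S)"
    unfolding HS_def cay_nbhd_def by auto
  have finHS: "finite HS" using HSimg finH assms(3) by simp
  have HsubHS: "H \<subseteq> HS" unfolding HS_def cay_nbhd_def
  proof
    fix x assume "x \<in> H"
    hence "x = x \<otimes> \<one> \<and> x \<in> H \<and> \<one> \<in> S" using HG assms(5) by auto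
    thus "x \<in> {x \<otimes> s |x s. x \<in> H \<and> s \<in> S}" by blast
  qed
  have SsubHS: "S \<subseteq> HS" unfolding HS_def cay_nbhd_def
  proof
    fix x assume "x \<in> S"
    hence "x = \<one> \<otimes> x \<and> \<one> \<in> H \<and> x \<in> S" using SG sub subgroup.one_closed l_one by (metis subsetD)
    thus "x \<in> {x \<otimes> s |x s. x \<in> H \<and> s \<in> S}" by blast
  qed
  have nb1: "cay_nbhd G S {\<one>} = S" unfolding cay_nbhd_def using SG by (auto, metis l_one subsetD)
  have adm1: "cay_admissible G S 1 {\<one>}"
  proof -
    have sub2: "cay_exterior G S H \<subseteq> carrier G - S"
      unfolding cay_exterior_def using SsubHS HS_def by auto
    have "card_ge (carrier G - S) 1"
    proof (cases "finite (carrier G - S)")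
      case True
      hence "finite (cay_exterior G S H)" using sub2 finite_subset by blast
      hence c2: "2 \<le> card (cay_exterior G S H)" using ext unfolding card_ge_def by auto
      have "card (cay_exterior G S H) \<le> card (carrier G - S)" using sub2 True card_mono by blast
      thus ?thesis using c2 unfolding card_ge_def by auto
    next
      case False thus ?thesis unfolding card_ge_def by auto
    qed
    thus ?thesis unfolding cay_admissible_def cay_exterior_def nb1 by auto
  qed
  have "kappa G S 1 \<le> card (cay_boundary G S {\<one>})"
    unfolding kappa_def by (rule Least_le) (use adm1 in blast)
  also have "cay_boundary G S {\<one>} = S - {\<one>}" unfolding cay_boundary_def nb1 ..
  finally have k1: "kappa G S 1 \<le> card S - 1" using assms(5) assms(3) by simp
  have "card (cay_boundary G S H) = card HS - card H"
    unfolding cay_boundary_def HS_def[symmetric] using HsubHS finH card_Diff_subset by blast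
  hence "card HS - card H \<le> card S - 1" using bd k1 assms(6) unfolding cay_degenerate_def by simp
  moreover have "card H \<le> card HS" "card S \<le> card HS" "1 \<le> card S"
    using HsubHS SsubHS finHS card_mono assms(3,5) by (auto simp: Suc_le_eq card_gt_0_iff)
  ultimately have cHSS: "card (HS - S) \<le> card H - 1"
    using card_Diff_subset[OF assms(3) SsubHS] cH by linarith
  define D where "D x = card ((H #> x) - S)" for x
  have cosS: "H #> u \<subseteq> HS" if "u \<in> S" for u
    using that unfolding r_coset_def HS_def cay_nbhd_def by blast
  have pair: "D s + D t \<le> card H - 1" if "s \<in> S" "t \<in> S" "H #> s \<noteq> H #> t" for s t
  proof -
    have disj: "(H #> s) \<inter> (H #> t) = {}"
    proof (rule ccontr)
      assume "(H #> s) \<inter> (H #> t) \<noteq> {}"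
      then obtain y where y: "y \<in> H #> s" "y \<in> H #> t" by blast
      have "H #> s = H #> y" using repr_independence[OF y(1)] that SG sub by blast
      moreover have "H #> t = H #> y" using repr_independence[OF y(2)] that SG sub by blast
      ultimately show False using that(3) by simp
    qed
    have "D s + D t = card (((H #> s) - S) \<union> ((H #> t) - S))"
      unfolding D_def
    proof (rule card_Un_disjoint[symmetric])
      show "finite ((H #> s) - S)" using finHS cosS[OF that(1)] by (meson finite_Diff finite_subset)
      show "finite ((H #> t) - S)" using finHS cosS[OF that(2)] by (meson finite_Diff finite_subset)
      show "((H #> s) - S) \<inter> ((H #> t) - S) = {}" using disj by blast
    qed
    also have "\<dots> \<le> card (HS - S)"
      by (rule card_mono) (use finHS cosS that in auto)
    finally show ?thesis using cHSS by simp
  qed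
  have "Max (D ` S) \<in> D ` S" using assms(3,5) by (intro Max_in) auto
  then obtain a where aS: "a \<in> S" and aeq: "D a = Max (D ` S)" by auto
  have amax: "D s \<le> D a" if "s \<in> S" for s using that aeq assms(3) by simp
  have good: "D s + D t \<le> card H - 1"
    if st: "s \<in> S" "t \<in> S" and nb: "\<not> (H #> s = H #> a \<and> H #> t = H #> a)" for s t
  proof (cases "H #> s = H #> t")
    case False thus ?thesis using pair st by blast
  next
    case True
    hence "H #> s \<noteq> H #> a" using nb by simp
    hence "D s + D a \<le> card H - 1" using pair st aS by blast
    moreover have "D t = D s" unfolding D_def using True by simp
    ultimately show ?thesis using amax[OF st(1)] by linarith
  qed
  have cnt: "card {g \<in> H. g \<otimes> x \<notin> S} = D x" if x: "x \<in> carrier G" for x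
  proof -
    have "bij_betw (\<lambda>g. g \<otimes> x) {g \<in> H. g \<otimes> x \<notin> S} ((H #> x) - S)"
      unfolding bij_betw_def
    proof
      show "inj_on (\<lambda>g. g \<otimes> x) {g \<in> H. g \<otimes> x \<notin> S}"
      proof (rule inj_onI)
        fix g1 g2 assume "g1 \<in> {g \<in> H. g \<otimes> x \<notin> S}" "g2 \<in> {g \<in> H. g \<otimes> x \<notin> S}"
          "g1 \<otimes> x = g2 \<otimes> x"
        thus "g1 = g2" using x HG r_cancel by blast
      qed
      show "(\<lambda>g. g \<otimes> x) ` {g \<in> H. g \<otimes> x \<notin> S} = (H #> x) - S"
        unfolding r_coset_def by auto
    qed
    thus ?thesis unfolding D_def by (rule bij_betw_same_card)
  qed
  show ?thesis
  proof (intro bexI[OF _ aS] equalityI subsetI)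
    fix z assume "z \<in> {inv s \<otimes> h \<otimes> t | s h t. s \<in> S \<and> h \<in> H \<and> t \<in> S}"
    then obtain s h t where z: "z = inv s \<otimes> h \<otimes> t" and st: "s \<in> S" "h \<in> H" "t \<in> S" by blast
    have sc: "s \<in> carrier G" "t \<in> carrier G" "h \<in> carrier G" using st SG HG by auto
    show "z \<in> {inv s \<otimes> t | s t. s \<in> S \<and> t \<in> S} \<union> {inv a \<otimes> h \<otimes> a | h. h \<in> H}"
    proof (cases "H #> s = H #> a \<and> H #> t = H #> a")
      case True
      have "s \<in> H #> a" using True rcos_self[OF sc(1) sub] by simp
      then obtain g1 where g1: "g1 \<in> H" "s = g1 \<otimes> a" unfolding r_coset_def by auto
      have "t \<in> H #> a" using True rcos_self[OF sc(2) sub] by simp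
      then obtain g2 where g2: "g2 \<in> H" "t = g2 \<otimes> a" unfolding r_coset_def by auto
      have ac: "a \<in> carrier G" using aS SG by auto
      have gc: "g1 \<in> carrier G" "g2 \<in> carrier G" using g1 g2 HG by auto
      have "z = inv a \<otimes> (inv g1 \<otimes> h \<otimes> g2) \<otimes> a"
        unfolding z g1(2) g2(2) using ac gc sc by (simp add: inv_mult_group m_assoc)
      moreover have "inv g1 \<otimes> h \<otimes> g2 \<in> H"
        using g1 g2 st sub by (simp add: subgroup.m_closed subgroup.m_inv_closed)
      ultimately show ?thesis by blast
    next
      case False
      have ht: "h \<otimes> t \<in> carrier G" using sc by simp
      have "H #> (h \<otimes> t) = H #> t"
        using repr_independence[OF rcosI[OF st(2) HG sc(2)] sc(2) sub] by simp
      hence Dht: "D (h \<otimes> t) = D t" unfolding D_def by simp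
      define A where "A = {g \<in> H. g \<otimes> s \<in> S}"
      define B where "B = {g \<in> H. g \<otimes> (h \<otimes> t) \<in> S}"
      have "H - A = {g \<in> H. g \<otimes> s \<notin> S}" unfolding A_def by blast
      hence cA: "card (H - A) = D s" using cnt[OF sc(1)] by simp
      have "H - B = {g \<in> H. g \<otimes> (h \<otimes> t) \<notin> S}" unfolding B_def by blast
      hence cB: "card (H - B) = D t" using cnt[OF ht] Dht by simp
      have "A \<inter> B \<noteq> {}"
      proof
        assume "A \<inter> B = {}"
        hence "H = (H - A) \<union> (H - B)" by auto
        hence "card H \<le> card (H - A) + card (H - B)" by (metis card_Un_le)
        thus False using good[OF st(1) st(3) False] cA cB cH by linarith
      qed
      then obtain g where g: "g \<in> H" "g \<otimes> s \<in> S" "g \<otimes> (h \<otimes> t) \<in> S"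
        unfolding A_def B_def by auto
      have gc: "g \<in> carrier G" using g HG by auto
      have e1: "inv g \<otimes> (g \<otimes> (h \<otimes> t)) = h \<otimes> t"
        using gc sc by (simp add: m_assoc[symmetric] l_inv)
      have "inv (g \<otimes> s) \<otimes> (g \<otimes> (h \<otimes> t)) = inv s \<otimes> (inv g \<otimes> (g \<otimes> (h \<otimes> t)))"
        using gc sc by (simp add: inv_mult_group m_assoc)
      also have "\<dots> = z" unfolding e1 z using sc by (simp add: m_assoc)
      finally have "z = inv (g \<otimes> s) \<otimes> (g \<otimes> (h \<otimes> t))" by simp
      thus ?thesis using g by blast
    qed
  next
    fix z assume "z \<in> {inv s \<otimes> t | s t. s \<in> S \<and> t \<in> S} \<union> {inv a \<otimes> h \<otimes> a | h. h \<in> H}"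
    thus "z \<in> {inv s \<otimes> h \<otimes> t | s h t. s \<in> S \<and> h \<in> H \<and> t \<in> S}"
    proof
      assume "z \<in> {inv s \<otimes> t | s t. s \<in> S \<and> t \<in> S}"
      then obtain s t where "z = inv s \<otimes> t" "s \<in> S" "t \<in> S" by blast
      moreover have "inv s \<otimes> t = inv s \<otimes> \<one> \<otimes> t" using \<open>s \<in> S\<close> SG by auto
      moreover have "\<one> \<in> H" using sub subgroup.one_closed by blast
      ultimately show ?thesis by blast
    next
      assume "z \<in> {inv a \<otimes> h \<otimes> a | h. h \<in> H}"
      thus ?thesis using aS by blast
    qed
  qed
qed

end
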